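(* Let $M$ be a strong module of a dually-CPT poset $\mathbf{P}=(X,P)$. If $M$ is one-sided in some CPT representation of $\mathbf{P}$ and the subposet induced by $M$ has connected comparability graph, then $M$ is a clique module.
   Context: A CPT representation of $\mathbf{P}$ assigns to each $x\in X$ a path $W_x$ of a host tree $T$ with $x<y$ iff $W_x\subsetneq W_y$; $\mathbf{P}$ is dually-CPT if $\mathbf{P}$ and its dual both have such representations. A module is a set $M\subseteq X$ such that each $y\notin M$ is comparable to all or none of the elements of $M$; it is strong if for every module $M'$, $M\cap M'=\emptyset$, $M\subseteq M'$ or $M'\subseteq M$. A strong module is a clique module if the complement of its induced comparability graph is disconnected. In a CPT representation, a set of elements is one-sided if all their paths arrive at (have an endpoint at) a common vertex $a$ of $T$ and all of these paths, except possibly one trivial (single-vertex) path, pass through a common neighbour $b$ of $a$ in $T$. *)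

theory Defs
  imports Main
begin

definition graph_on :: "'v set \<Rightarrow> ('v \<Rightarrow> 'v \<Rightarrow> bool) \<Rightarrow> bool" where
  "graph_on V E \<longleftrightarrow> (\<forall>u v. E u v \<longrightarrow> u \<in> V \<and> v \<in> V) \<and>
     (\<forall>u v. E u v \<longrightarrow> E v u) \<and> (\<forall>u. \<not> E u u)"

definition is_path :: "'v set \<Rightarrow> ('v \<Rightarrow> 'v \<Rightarrow> bool) \<Rightarrow> 'v list \<Rightarrow> bool" where
  "is_path V E p \<longleftrightarrow> p \<noteq> [] \<and> distinct p \<and> set p \<subseteq> V \<and>
     (\<forall>i. Suc i < length p \<longrightarrow> E (p ! i) (p ! Suc i))"

definition is_cycle :: "'v set \<Rightarrow> ('v \<Rightarrow> 'v \<Rightarrow> bool) \<Rightarrow> 'v list \<Rightarrow> bool" where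
  "is_cycle V E c \<longleftrightarrow> is_path V E c \<and> length c \<ge> 3 \<and> E (last c) (hd c)"

definition is_tree :: "'v set \<Rightarrow> ('v \<Rightarrow> 'v \<Rightarrow> bool) \<Rightarrow> bool" where
  "is_tree V E \<longleftrightarrow> finite V \<and> V \<noteq> {} \<and> graph_on V E \<and>
     (\<forall>u\<in>V. \<forall>v\<in>V. \<exists>p. is_path V E p \<and> hd p = u \<and> last p = v) \<and>
     (\<nexists>c. is_cycle V E c)"

definition strict_poset :: "'a set \<Rightarrow> ('a \<Rightarrow> 'a \<Rightarrow> bool) \<Rightarrow> bool" where
  "strict_poset X P \<longleftrightarrow> finite X \<and> (\<forall>x\<in>X. \<not> P x x) \<and>
     (\<forall>x\<in>X. \<forall>y\<in>X. \<forall>z\<in>X. P x y \<longrightarrow> P y z \<longrightarrow> P x z)"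

definition dual_rel :: "('a \<Rightarrow> 'a \<Rightarrow> bool) \<Rightarrow> 'a \<Rightarrow> 'a \<Rightarrow> bool" where
  "dual_rel P x y \<longleftrightarrow> P y x"

definition comparable :: "('a \<Rightarrow> 'a \<Rightarrow> bool) \<Rightarrow> 'a \<Rightarrow> 'a \<Rightarrow> bool" where
  "comparable P x y \<longleftrightarrow> x \<noteq> y \<and> (P x y \<or> P y x)"

definition CPT_rep :: "'a set \<Rightarrow> ('a \<Rightarrow> 'a \<Rightarrow> bool) \<Rightarrow> 'v set \<Rightarrow> ('v \<Rightarrow> 'v \<Rightarrow> bool)
    \<Rightarrow> ('a \<Rightarrow> 'v list) \<Rightarrow> bool" where
  "CPT_rep X P V E W \<longleftrightarrow> is_tree V E \<and> (\<forall>x\<in>X. is_path V E (W x)) \<and>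
     (\<forall>x\<in>X. \<forall>y\<in>X. P x y \<longleftrightarrow> set (W x) \<subset> set (W y))"

text \<open>Host trees are finite, so their vertices may be taken to be naturals.\<close>
definition is_CPT :: "'a set \<Rightarrow> ('a \<Rightarrow> 'a \<Rightarrow> bool) \<Rightarrow> bool" where
  "is_CPT X P \<longleftrightarrow> (\<exists>(V::nat set) E W. CPT_rep X P V E W)"

definition dually_CPT :: "'a set \<Rightarrow> ('a \<Rightarrow> 'a \<Rightarrow> bool) \<Rightarrow> bool" where
  "dually_CPT X P \<longleftrightarrow> is_CPT X P \<and> is_CPT X (dual_rel P)"

definition one_sided :: "'v set \<Rightarrow> ('v \<Rightarrow> 'v \<Rightarrow> bool) \<Rightarrow> ('a \<Rightarrow> 'v list) \<Rightarrow> 'a set \<Rightarrow> bool" where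
  "one_sided V E W M \<longleftrightarrow> (\<exists>a b. a \<in> V \<and> b \<in> V \<and> E a b \<and>
     (\<forall>x\<in>M. hd (W x) = a \<or> last (W x) = a) \<and>
     (\<forall>x\<in>M. b \<notin> set (W x) \<longrightarrow> length (W x) = 1) \<and>
     (\<forall>x\<in>M. \<forall>y\<in>M. b \<notin> set (W x) \<longrightarrow> b \<notin> set (W y) \<longrightarrow> x = y))"

definition is_module :: "'a set \<Rightarrow> ('a \<Rightarrow> 'a \<Rightarrow> bool) \<Rightarrow> 'a set \<Rightarrow> bool" where
  "is_module X P M \<longleftrightarrow> M \<subseteq> X \<and>
     (\<forall>y\<in>X - M. (\<forall>m\<in>M. comparable P y m) \<or> (\<forall>m\<in>M. \<not> comparable P y m))"

definition strong_module :: "'a set \<Rightarrow> ('a \<Rightarrow> 'a \<Rightarrow> bool) \<Rightarrow> 'a set \<Rightarrow> bool" where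
  "strong_module X P M \<longleftrightarrow> is_module X P M \<and>
     (\<forall>M'. is_module X P M' \<longrightarrow> M \<inter> M' = {} \<or> M \<subseteq> M' \<or> M' \<subseteq> M)"

definition connected_on :: "'a set \<Rightarrow> ('a \<Rightarrow> 'a \<Rightarrow> bool) \<Rightarrow> bool" where
  "connected_on S R \<longleftrightarrow> (\<forall>A B. A \<union> B = S \<longrightarrow> A \<inter> B = {} \<longrightarrow> A \<noteq> {} \<longrightarrow> B \<noteq> {} \<longrightarrow>
     (\<exists>a\<in>A. \<exists>b\<in>B. R a b))"

definition incomparable :: "('a \<Rightarrow> 'a \<Rightarrow> bool) \<Rightarrow> 'a \<Rightarrow> 'a \<Rightarrow> bool" where
  "incomparable P x y \<longleftrightarrow> x \<noteq> y \<and> \<not> comparable P x y"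

definition clique_module :: "'a set \<Rightarrow> ('a \<Rightarrow> 'a \<Rightarrow> bool) \<Rightarrow> 'a set \<Rightarrow> bool" where
  "clique_module X P M \<longleftrightarrow> strong_module X P M \<and> \<not> connected_on M (incomparable P)"

end

theory Submission
  imports Defs
begin

lemma path_rev:
  assumes "is_path V E p" "graph_on V E"
  shows "is_path V E (rev p)"
proof -
  have "E (rev p ! i) (rev p ! Suc i)" if "Suc i < length p" for i
  proof -
    have "E (p ! (length p - Suc (Suc i))) (p ! Suc (length p - Suc (Suc i)))"
      using assms(1) that unfolding is_path_def by simp
    moreover have "Suc (length p - Suc (Suc i)) = length p - Suc i" using that by simp
    ultimately have "E (p ! (length p - Suc (Suc i))) (p ! (length p - Suc i))" by simp
    then show ?thesis using assms(2) that unfolding graph_on_def by (simp add: rev_nth)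
  qed
  then show ?thesis using assms(1) unfolding is_path_def by auto
qed

lemma nochord:
  assumes "is_tree V E" "is_path V E p" "i < j" "j < length p" "E (p ! i) (p ! j)"
  shows "j = Suc i"
proof (rule ccontr)
  assume ne: "j \<noteq> Suc i"
  define c where "c = take (j - i + 1) (drop i p)"
  have len: "length c = j - i + 1" using assms(3,4) unfolding c_def by simp
  have cn: "c ! k = p ! (i + k)" if "k \<le> j - i" for k
    using that assms(3,4) unfolding c_def by simp
  have g: "graph_on V E" using assms(1) unfolding is_tree_def by simp
  have "is_path V E c"
    unfolding is_path_def
  proof (intro conjI allI impI)
    show "c \<noteq> []" using len by auto
    show "distinct c" using assms(2) unfolding c_def is_path_def by simp
    show "set c \<subseteq> V" using assms(2) unfolding c_def is_path_def
      by (meson order_trans set_drop_subset set_take_subset)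
    fix k assume k: "Suc k < length c"
    have "E (p ! (i + k)) (p ! Suc (i + k))" using assms(2,4) k len unfolding is_path_def by simp
    then show "E (c ! k) (c ! Suc k)" using k len cn[of k] cn[of "Suc k"] by simp
  qed
  moreover have "length c \<ge> 3" using len ne assms(3) by simp
  moreover have "c \<noteq> []" using len by auto
  moreover have "hd c = p ! i" using cn[of 0] len \<open>c \<noteq> []\<close> by (simp add: hd_conv_nth)
  moreover have "last c = p ! j" using cn[of "j - i"] len assms(3) \<open>c \<noteq> []\<close>
    by (simp add: last_conv_nth)
  moreover have "E (p ! j) (p ! i)" using g assms(5) unfolding graph_on_def by blast
  ultimately have "is_cycle V E c" unfolding is_cycle_def by metis
  then show False using assms(1) unfolding is_tree_def by blast
qed

lemma prefix_path:
  assumes "is_tree V E" "is_path V E p" "is_path V E q" "set q \<subseteq> set p" "hd q = hd p"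
  shows "\<forall>k < length q. k < length p \<and> q ! k = p ! k"
proof (intro allI impI)
  fix k assume "k < length q"
  then show "k < length p \<and> q ! k = p ! k"
  proof (induction k rule: less_induct)
    case (less k)
    show ?case
    proof (cases k)
      case 0
      then show ?thesis using assms(2,3,5) unfolding is_path_def by (simp add: hd_conv_nth)
    next
      case (Suc m)
      have IH: "m < length p \<and> q ! m = p ! m" using less Suc by simp
      have e: "E (q ! m) (q ! k)" using assms(3) less.prems Suc unfolding is_path_def by simp
      have "q ! k \<in> set p" using assms(4) less.prems by auto
      then obtain j where j: "j < length p" "p ! j = q ! k" by (auto simp: in_set_conv_nth)
      have dq: "distinct q" using assms(3) unfolding is_path_def by simp
      have "q ! k \<noteq> q ! m" using dq less.prems Suc by (simp add: nth_eq_iff_index_eq)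
      then have "j \<noteq> m" using j IH by auto
      have g: "graph_on V E" using assms(1) unfolding is_tree_def by simp
      show ?thesis
      proof (cases "j > m")
        case True
        have "j = Suc m" using nochord[OF assms(1,2) True j(1)] e IH j by simp
        then show ?thesis using j Suc by simp
      next
        case False
        then have jm: "j < m" using \<open>j \<noteq> m\<close> by simp
        have "E (p ! m) (p ! j)" using e IH j by simp
        then have "E (p ! j) (p ! m)" using g unfolding graph_on_def by blast
        then have "m = Suc j" using nochord[OF assms(1,2) jm] IH by simp
        then have "q ! j = p ! j" using less Suc by simp
        then have "q ! j = q ! k" using j by simp
        moreover have "j < length q" "j \<noteq> k" using jm Suc less.prems by auto
        ultimately show ?thesis using dq less.prems by (simp add: nth_eq_iff_index_eq)
      qed
    qed
  qed
qed

lemma prefix_set: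
  assumes "is_tree V E" "is_path V E p" "is_path V E q" "set q \<subseteq> set p" "hd q = hd p"
  shows "set q = set (take (length q) p)"
proof -
  have h: "\<forall>k < length q. k < length p \<and> q ! k = p ! k" using prefix_path[OF assms] .
  then have "length q \<le> length p" using h[rule_format, of "length p"]
    by (cases "length q \<le> length p") auto
  then have "q = take (length q) p" using h by (intro nth_equalityI) auto
  then show ?thesis by simp
qed

lemma orient:
  assumes "is_tree V E" "is_path V E p" "hd p = a \<or> last p = a"
  shows "\<exists>p'. is_path V E p' \<and> hd p' = a \<and> set p' = set p"
proof (cases "hd p = a")
  case True then show ?thesis using assms by blast
next
  case False
  have g: "graph_on V E" using assms(1) unfolding is_tree_def by simp
  have "p \<noteq> []" using assms(2) unfolding is_path_def by simp
  then have "hd (rev p) = a" using False assms(3) by (simp add: hd_rev)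
  then show ?thesis using path_rev[OF assms(2) g] by auto
qed

lemma nested:
  assumes "is_tree V E" "is_path V E p" "is_path V E q" "is_path V E s"
    "hd p = a \<or> last p = a" "hd q = a \<or> last q = a" "hd s = a \<or> last s = a"
    "set q \<subseteq> set p" "set s \<subseteq> set p"
  shows "set q \<subseteq> set s \<or> set s \<subseteq> set q"
proof -
  obtain p' where p': "is_path V E p'" "hd p' = a" "set p' = set p" using orient[OF assms(1,2,5)] by blast
  obtain q' where q': "is_path V E q'" "hd q' = a" "set q' = set q" using orient[OF assms(1,3,6)] by blast
  obtain s' where s': "is_path V E s'" "hd s' = a" "set s' = set s" using orient[OF assms(1,4,7)] by blast
  have 1: "set q = set (take (length q') p')" using prefix_set[OF assms(1) p'(1) q'(1)] p' q' assms(8) by simp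
  have 2: "set s = set (take (length s') p')" using prefix_set[OF assms(1) p'(1) s'(1)] p' s' assms(9) by simp
  show ?thesis
  proof (cases "length q' \<le> length s'")
    case True then show ?thesis using 1 2 set_take_subset_set_take[OF True, of p'] by simp
  next
    case False then have "length s' \<le> length q'" by simp
    then show ?thesis using 1 2 set_take_subset_set_take[of "length s'" "length q'" p'] by simp
  qed
qed

theorem mainTheorem9:
  fixes X :: "'a set" and P :: "'a \<Rightarrow> 'a \<Rightarrow> bool" and M :: "'a set"
    and V :: "'v set" and E :: "'v \<Rightarrow> 'v \<Rightarrow> bool" and W :: "'a \<Rightarrow> 'v list"
  assumes "strict_poset X P"
    and "dually_CPT X P"
    and "strong_module X P M"
    and "card M \<ge> 2"
    and "CPT_rep X P V E W"
    and "one_sided V E W M"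
    and "connected_on M (comparable P)"
  shows "clique_module X P M"
proof -
  have MX: "M \<subseteq> X" using assms(3) unfolding strong_module_def is_module_def by simp
  have tree: "is_tree V E" and paths: "\<And>x. x \<in> X \<Longrightarrow> is_path V E (W x)"
    and Prel: "\<And>x y. x \<in> X \<Longrightarrow> y \<in> X \<Longrightarrow> P x y \<longleftrightarrow> set (W x) \<subset> set (W y)"
    using assms(5) unfolding CPT_rep_def by auto
  obtain a where ends: "\<And>x. x \<in> M \<Longrightarrow> hd (W x) = a \<or> last (W x) = a"
    using assms(6) unfolding one_sided_def by blast
  have fin: "finite M" using assms(4) by (metis card.infinite not_numeral_le_zero)
  have "M \<noteq> {}" using assms(4) by auto
  then obtain r0 where "r0 \<in> M" by blast
  obtain r where r: "r \<in> M" "\<And>y. y \<in> M \<Longrightarrow> card (set (W r)) \<le> card (set (W y))"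
    using ex_has_least_nat[of "\<lambda>x. x \<in> M" r0 "\<lambda>x. card (set (W x))"] \<open>r0 \<in> M\<close> by blast
  define S where "S = {x \<in> M. set (W r) \<subseteq> set (W x)}"
  have SM: "S = M"
  proof (rule ccontr)
    assume "S \<noteq> M"
    then have "M - S \<noteq> {}" unfolding S_def by auto
    moreover have "S \<noteq> {}" using r unfolding S_def by auto
    ultimately obtain x y where xy: "x \<in> S" "y \<in> M - S" "comparable P x y"
      using assms(7) unfolding connected_on_def
      by (metis Diff_disjoint Diff_partition S_def mem_Collect_eq subsetI)
    have xX: "x \<in> X" "y \<in> X" "x \<in> M" "y \<in> M" using xy MX unfolding S_def by auto
    have rS: "set (W r) \<subseteq> set (W x)" using xy unfolding S_def by auto
    have ny: "\<not> set (W r) \<subseteq> set (W y)" using xy unfolding S_def by auto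
    show False
    proof (cases "P x y")
      case True then show False using Prel xX rS ny by blast
    next
      case False
      then have "P y x" using xy unfolding comparable_def by auto
      then have yx: "set (W y) \<subseteq> set (W x)" using Prel xX by blast
      have "set (W r) \<subseteq> set (W y) \<or> set (W y) \<subseteq> set (W r)"
        using nested[OF tree paths[OF xX(1)] paths[of r] paths[OF xX(2)] ends[OF xX(3)] ends[OF r(1)]
            ends[OF xX(4)] rS yx] r MX by blast
      then have "set (W y) \<subseteq> set (W r)" using ny by blast
      moreover have "card (set (W r)) \<le> card (set (W y))" using r xX by blast
      ultimately have "set (W y) = set (W r)" by (simp add: card_seteq)
      then show False using ny by simp
    qed
  qed
  define R where "R = {x \<in> M. set (W x) = set (W r)}"
  have "\<not> connected_on M (incomparable P)"
  proof (cases "M - R = {}")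
    case False
    have "\<not> (\<exists>x\<in>R. \<exists>y\<in>M - R. incomparable P x y)"
    proof
      assume "\<exists>x\<in>R. \<exists>y\<in>M - R. incomparable P x y"
      then obtain x y where xy: "x \<in> R" "y \<in> M - R" "incomparable P x y" by blast
      have "x \<in> X" "y \<in> X" using xy MX unfolding R_def by auto
      moreover have "set (W x) \<subset> set (W y)" using xy SM unfolding R_def S_def by auto
      ultimately have "P x y" "x \<noteq> y" using Prel by auto
      then show False using xy(3) unfolding incomparable_def comparable_def by auto
    qed
    moreover have "R \<union> (M - R) = M" "R \<inter> (M - R) = {}" "R \<noteq> {}" using r unfolding R_def by auto
    ultimately show ?thesis using False unfolding connected_on_def by blast
  next
    case True
    have "\<not> (\<forall>a\<in>M. \<forall>b\<in>M. a = b)" using card_le_Suc0_iff_eq[OF fin] assms(4) by simp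
    then obtain m1 m2 where m: "m1 \<in> M" "m2 \<in> M" "m1 \<noteq> m2" by blast
    have "{m1} \<union> (M - {m1}) = M" "{m1} \<inter> (M - {m1}) = {}" "{m1} \<noteq> {}" "M - {m1} \<noteq> {}"
      using m by auto
    then obtain y where y: "y \<in> M" "comparable P m1 y"
      using assms(7) unfolding connected_on_def by blast
    have "set (W m1) = set (W y)" using True y m unfolding R_def by auto
    then have False using y m MX Prel unfolding comparable_def by blast
    then show ?thesis by simp
  qed
  then show ?thesis using assms(3) unfolding clique_module_def by simp
qed

end
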